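(* Let $k\ge 0$ and $\tau\ge 1$ be integers and $0<\kappa\le 1$. Then there exists an integer $K$ such that for every blockade $\mathcal{B}=(B_1,\ldots,B_K)$ of length $K$ and width $W$ in a graph, there is an equicardinal minor $\mathcal{B}'$ of $\mathcal{B}$ of length $k$ and width at least $\kappa^{2^K\tau^\tau}W$ such that $\mathcal{B}'$ is $\tau$-support-uniform and $(\kappa,\tau)$-support-invariant.
   Context: A blockade in a graph $G$ is a sequence $\mathcal{B}=(B_i:i\in I)$ of pairwise disjoint nonempty subsets of $V(G)$ (blocks), $I$ a finite set of integers; its length is $|I|$, its width is $\min_i|B_i|$; it is equicardinal if all blocks have the same cardinality. A sub-blockade is $(B_i:i\in I')$ for $I'\subseteq I$; a contraction is $(B_i':i\in I)$ with $\emptyset\ne B_i'\subseteq B_i$; a minor is a contraction of a sub-blockade. An induced subgraph $H$ of $G$ is $\mathcal{B}$-rainbow if each vertex of $H$ lies in some block and no two lie in the same block; its support is the set of $i\in I$ with $V(H)\cap B_i\neq\emptyset$. The $\mathcal{B}$-ordering of a $\mathcal{B}$-rainbow $H$ is the linear order on $V(H)$ with $u<v$ if $u\in B_i$, $v\in B_j$, $i<j$. An ordered graph is a graph with a linear order of its vertex set; a $\mathcal{B}$-rainbow $H$ is a copy of an ordered graph $J$ if $H$ with its $\mathcal{B}$-ordering is isomorphic to $J$ as ordered graphs. The trace of $J$ relative to $\mathcal{B}$ is the set of supports of all $\mathcal{B}$-rainbow copies of $J$. $\mathcal{B}$ is $\tau$-support-uniform if for every ordered tree $J$ with $|J|\le\tau$,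 the trace of $J$ relative to $\mathcal{B}$ is either empty or consists of all subsets of $I$ of cardinality $|J|$. $\mathcal{B}$ is $(\kappa,\tau)$-support-invariant if for every contraction $\mathcal{B}'$ of $\mathcal{B}$ of width at least $\kappa$ times the width of $\mathcal{B}$, and every ordered tree $J$ with $|J|\le\tau$, the trace of $J$ relative to $\mathcal{B}$ equals the trace of $J$ relative to $\mathcal{B}'$. *)

theory Defs
  imports Complex_Main
begin

definition graph :: "'v set \<Rightarrow> ('v \<Rightarrow> 'v \<Rightarrow> bool) \<Rightarrow> bool" where
  "graph V E \<longleftrightarrow> finite V \<and> (\<forall>x y. E x y \<longrightarrow> x \<in> V \<and> y \<in> V)
     \<and> (\<forall>x y. E x y \<longrightarrow> E y x) \<and> (\<forall>x. \<not> E x x)"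

definition blockade :: "'v set \<Rightarrow> int set \<Rightarrow> (int \<Rightarrow> 'v set) \<Rightarrow> bool" where
  "blockade V I B \<longleftrightarrow> finite I \<and> (\<forall>i\<in>I. B i \<noteq> {} \<and> B i \<subseteq> V)
     \<and> (\<forall>i\<in>I. \<forall>j\<in>I. i \<noteq> j \<longrightarrow> B i \<inter> B j = {})"

definition width :: "int set \<Rightarrow> (int \<Rightarrow> 'v set) \<Rightarrow> nat" where
  "width I B = Min ((\<lambda>i. card (B i)) ` I)"

text \<open>"width at least x" (min of block sizes \<ge> x; vacuous for empty index set).\<close>
definition width_at_least :: "int set \<Rightarrow> (int \<Rightarrow> 'v set) \<Rightarrow> real \<Rightarrow> bool" where
  "width_at_least I B x \<longleftrightarrow> (\<forall>i\<in>I. x \<le> real (card (B i)))"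

definition equicardinal :: "int set \<Rightarrow> (int \<Rightarrow> 'v set) \<Rightarrow> bool" where
  "equicardinal I B \<longleftrightarrow> (\<forall>i\<in>I. \<forall>j\<in>I. card (B i) = card (B j))"

definition contraction :: "int set \<Rightarrow> (int \<Rightarrow> 'v set) \<Rightarrow> (int \<Rightarrow> 'v set) \<Rightarrow> bool" where
  "contraction I B B' \<longleftrightarrow> (\<forall>i\<in>I. B' i \<noteq> {} \<and> B' i \<subseteq> B i)"

definition minor :: "int set \<Rightarrow> (int \<Rightarrow> 'v set) \<Rightarrow> int set \<Rightarrow> (int \<Rightarrow> 'v set) \<Rightarrow> bool" where
  "minor I B I' B' \<longleftrightarrow> I' \<subseteq> I \<and> contraction I' B B'"

text \<open>Ordered graphs: vertex set {0..<n} with the natural order, adjacency J.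
  Ordered tree: J a tree on {0..<n} (nonempty, connected, no cycles).\<close>
definition ordered_tree :: "nat \<Rightarrow> (nat \<Rightarrow> nat \<Rightarrow> bool) \<Rightarrow> bool" where
  "ordered_tree n J \<longleftrightarrow> n \<ge> 1
     \<and> (\<forall>a b. J a b \<longrightarrow> a < n \<and> b < n)
     \<and> (\<forall>a b. J a b \<longrightarrow> J b a) \<and> (\<forall>a. \<not> J a a)
     \<and> (\<forall>a<n. \<forall>b<n. J\<^sup>*\<^sup>* a b)
     \<and> \<not> (\<exists>cs. length cs \<ge> 3 \<and> distinct cs
            \<and> (\<forall>i<length cs. J (cs ! i) (cs ! ((i + 1) mod length cs))))"

definition rainbow :: "int set \<Rightarrow> (int \<Rightarrow> 'v set) \<Rightarrow> 'v set \<Rightarrow> bool" where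
  "rainbow I B X \<longleftrightarrow> (\<forall>x\<in>X. \<exists>i\<in>I. x \<in> B i)
     \<and> (\<forall>x\<in>X. \<forall>y\<in>X. \<forall>i\<in>I. x \<in> B i \<and> y \<in> B i \<longrightarrow> x = y)"

definition support :: "int set \<Rightarrow> (int \<Rightarrow> 'v set) \<Rightarrow> 'v set \<Rightarrow> int set" where
  "support I B X = {i\<in>I. X \<inter> B i \<noteq> {}}"

text \<open>The induced subgraph on X is a B-rainbow copy of the ordered graph (n, J):
  there is a bijection from {0..<n} to X which is an isomorphism of ordered graphs,
  where X carries the B-ordering.\<close>
definition rainbow_copy ::
  "('v \<Rightarrow> 'v \<Rightarrow> bool) \<Rightarrow> int set \<Rightarrow> (int \<Rightarrow> 'v set) \<Rightarrow> 'v set \<Rightarrow> nat \<Rightarrow> (nat \<Rightarrow> nat \<Rightarrow> bool) \<Rightarrow> bool" where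
  "rainbow_copy E I B X n J \<longleftrightarrow> rainbow I B X \<and>
     (\<exists>f. bij_betw f {0..<n} X
        \<and> (\<forall>a<n. \<forall>b<n. \<forall>i\<in>I. \<forall>j\<in>I. f a \<in> B i \<longrightarrow> f b \<in> B j \<longrightarrow> (a < b \<longleftrightarrow> i < j))
        \<and> (\<forall>a<n. \<forall>b<n. a \<noteq> b \<longrightarrow> (E (f a) (f b) \<longleftrightarrow> J a b)))"

definition trace ::
  "('v \<Rightarrow> 'v \<Rightarrow> bool) \<Rightarrow> int set \<Rightarrow> (int \<Rightarrow> 'v set) \<Rightarrow> nat \<Rightarrow> (nat \<Rightarrow> nat \<Rightarrow> bool) \<Rightarrow> int set set" where
  "trace E I B n J = {support I B X | X. rainbow_copy E I B X n J}"

definition support_uniform ::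
  "('v \<Rightarrow> 'v \<Rightarrow> bool) \<Rightarrow> int set \<Rightarrow> (int \<Rightarrow> 'v set) \<Rightarrow> nat \<Rightarrow> bool" where
  "support_uniform E I B \<tau> \<longleftrightarrow> (\<forall>n J. ordered_tree n J \<and> n \<le> \<tau> \<longrightarrow>
      trace E I B n J = {} \<or> trace E I B n J = {S. S \<subseteq> I \<and> card S = n})"

definition support_invariant ::
  "('v \<Rightarrow> 'v \<Rightarrow> bool) \<Rightarrow> int set \<Rightarrow> (int \<Rightarrow> 'v set) \<Rightarrow> real \<Rightarrow> nat \<Rightarrow> bool" where
  "support_invariant E I B \<kappa> \<tau> \<longleftrightarrow> (\<forall>B'. contraction I B B'
      \<and> width_at_least I B' (\<kappa> * real (width I B)) \<longrightarrow>
      (\<forall>n J. ordered_tree n J \<and> n \<le> \<tau> \<longrightarrow> trace E I B n J = trace E I B' n J))"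

end

theory Submission
  imports Defs "HOL-Library.Ramsey"
begin

lemma partn_lst_transfer:
  assumes P: "partn_lst {..<N} qs r" and A: "finite A" "N \<le> card A"
  shows "partn_lst A qs r"
  unfolding partn_lst_def
proof (intro ballI)
  fix f assume f: "f \<in> (nsets (A) (r)) \<rightarrow> {..<length qs}"
  obtain B where B: "B \<subseteq> A" "card B = N"
    using A by (meson obtain_subset_with_card_n)
  have fB: "finite B" using B A finite_subset by blast
  obtain g where g: "bij_betw g {0..<N} B"
    using ex_bij_betw_nat_finite[OF fB] B by auto
  have g1: "g \<in> {..<N} \<rightarrow> A" "inj_on g {..<N}"
    using g B by (auto simp: bij_betw_def lessThan_atLeast0)
  have "f \<circ> (\<lambda>X. g ` X) \<in> (nsets ({..<N}) (r)) \<rightarrow> {..<length qs}"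
    using nsets_compose_image_funcset[OF f g1] .
  then obtain i H where i: "i < length qs" and H: "H \<in> (nsets ({..<N}) (qs!i))"
      and hom: "(f \<circ> (\<lambda>X. g ` X)) ` ((nsets (H) (r))) \<subseteq> {i}"
    using P unfolding partn_lst_def monochromatic_def by blast
  have injH: "inj_on g H" using g1(2) H by (auto simp: nsets_def intro: inj_on_subset)
  have "g ` H \<in> (nsets (A) (qs!i))"
    using H g1 injH by (auto simp: nsets_def card_image)
  moreover have "f ` ((nsets (g ` H) (r))) \<subseteq> {i}"
  proof
    fix y assume "y \<in> f ` ((nsets (g ` H) (r)))"
    then obtain Y where Y: "Y \<in> (nsets (g ` H) (r))" "y = f Y" by blast
    obtain Z where "Z \<in> (nsets (H) (r))" "Y = g ` Z" using nset_image_obtains[OF Y(1) injH] by blast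
    then show "y \<in> {i}" using hom Y(2) by auto
  qed
  ultimately show "\<exists>i<length qs. monochromatic A (qs ! i) r f i"
    using i unfolding monochromatic_def by blast
qed

lemma multi_ramsey:
  "\<exists>N. \<forall>(A::nat set) (c::nat \<Rightarrow> nat set \<Rightarrow> bool). finite A \<and> N \<le> card A \<longrightarrow>
     (\<exists>H\<subseteq>A. card H = k \<and> (\<forall>j<length rs. \<forall>X\<in>(nsets (H) (rs!j)). \<forall>Y\<in>(nsets (H) (rs!j)). c j X = c j Y))"
proof (induction rs)
  case Nil
  show ?case
    by (rule exI[of _ k]) (auto intro: obtain_subset_with_card_n)
next
  case (Cons r rs)
  then obtain N' where N': "\<And>A (c::nat \<Rightarrow> nat set \<Rightarrow> bool). finite A \<Longrightarrow> N' \<le> card A \<Longrightarrow>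
     (\<exists>H\<subseteq>A. card H = k \<and> (\<forall>j<length rs. \<forall>X\<in>(nsets (H) (rs!j)). \<forall>Y\<in>(nsets (H) (rs!j)). c j X = c j Y))"
    by blast
  obtain N :: nat where N: "partn_lst {..<N} [N', N'] r" using ramsey_full by blast
  show ?case
  proof (rule exI[of _ N], intro allI impI)
    fix A :: "nat set" and c :: "nat \<Rightarrow> nat set \<Rightarrow> bool"
    assume A: "finite A \<and> N \<le> card A"
    have P: "partn_lst A [N', N'] r" using partn_lst_transfer[OF N] A by blast
    define f where "f X = (if c 0 X then 0 else (1::nat))" for X
    have f: "f \<in> (nsets (A) (r)) \<rightarrow> {..<length [N',N']}" by (simp add: f_def Pi_def)
    then obtain i H0 where i: "i < length [N',N']" and H0: "H0 \<in> (nsets (A) ([N',N']!i))"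
        and hom: "f ` ((nsets (H0) (r))) \<subseteq> {i}"
      using partn_lstE[OF P f refl] by blast
    have "[N',N']!i = N'" using i by (simp add: nth_Cons split: nat.split)
    then have H0': "H0 \<subseteq> A" "finite H0" "card H0 = N'" using H0 by (auto simp: nsets_def)
    obtain H where H: "H \<subseteq> H0" "card H = k"
        and homH: "\<forall>j<length rs. \<forall>X\<in>(nsets (H) (rs!j)). \<forall>Y\<in>(nsets (H) (rs!j)). c (Suc j) X = c (Suc j) Y"
      using N'[of H0 "\<lambda>j. c (Suc j)"] H0' by auto
    have hom0: "\<forall>X\<in>(nsets (H) (r)). \<forall>Y\<in>(nsets (H) (r)). c 0 X = c 0 Y"
    proof (intro ballI)
      fix X Y assume "X \<in> (nsets (H) (r))" "Y \<in> (nsets (H) (r))"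
      then have "X \<in> (nsets (H0) (r))" "Y \<in> (nsets (H0) (r))" using H(1) nsets_mono by blast+
      then have "f X = i" "f Y = i" using hom by auto
      then show "c 0 X = c 0 Y" by (auto simp: f_def split: if_splits)
    qed
    have "\<forall>j<length (r # rs). \<forall>X\<in>nsets H ((r # rs) ! j). \<forall>Y\<in>nsets H ((r # rs) ! j). c j X = c j Y"
    proof (intro allI impI)
      fix j assume j: "j < length (r # rs)"
      show "\<forall>X\<in>nsets H ((r # rs) ! j). \<forall>Y\<in>nsets H ((r # rs) ! j). c j X = c j Y"
      proof (cases j)
        case 0
        then have "(r # rs) ! j = r" "c j = c 0" by simp_all
        then show ?thesis using hom0 by metis
      next
        case (Suc j')
        then have "j' < length rs" using j by simp
        moreover have "(r # rs) ! j = rs ! j'" "c j = c (Suc j')" using Suc by simp_all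
        ultimately show ?thesis using homH by metis
      qed
    qed
    then show "\<exists>H\<subseteq>A. card H = k \<and> (\<forall>j<length (r # rs). \<forall>X\<in>nsets H ((r # rs) ! j). \<forall>Y\<in>nsets H ((r # rs) ! j). c j X = c j Y)"
      using H H0' by blast
  qed
qed

definition disj :: "int set \<Rightarrow> (int \<Rightarrow> 'v set) \<Rightarrow> bool" where
  "disj I D \<longleftrightarrow> (\<forall>i\<in>I. \<forall>j\<in>I. i \<noteq> j \<longrightarrow> D i \<inter> D j = {})"

lemma key:
  assumes I: "I' \<subseteq> I0" and dG: "disj I0 G" and FG: "\<forall>i\<in>I'. F i \<subseteq> G i"
    and X: "X \<subseteq> (\<Union>i\<in>I'. F i)"
  shows "rainbow_copy E I' F X n J \<longleftrightarrow> rainbow_copy E I0 G X n J"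
    and "support I' F X = support I0 G X"
proof -
  have H: "x \<in> G i \<longleftrightarrow> (i \<in> I' \<and> x \<in> F i)" if x: "x \<in> X" and i: "i \<in> I0" for x i
  proof -
    obtain i0 where i0: "i0 \<in> I'" "x \<in> F i0" using x X by blast
    then have "x \<in> G i0" using FG by blast
    show ?thesis
    proof
      assume "x \<in> G i"
      then have "i = i0" using dG i0 i I \<open>x \<in> G i0\<close> unfolding disj_def by blast
      then show "i \<in> I' \<and> x \<in> F i" using i0 by blast
    next
      assume "i \<in> I' \<and> x \<in> F i" then show "x \<in> G i" using FG by blast
    qed
  qed
  have R: "rainbow I' F X \<longleftrightarrow> rainbow I0 G X"
  proof -
    have 1: "(\<forall>x\<in>X. \<exists>i\<in>I'. x \<in> F i) \<longleftrightarrow> (\<forall>x\<in>X. \<exists>i\<in>I0. x \<in> G i)"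
      using H I by blast
    have 2: "(\<forall>x\<in>X. \<forall>y\<in>X. \<forall>i\<in>I'. x \<in> F i \<and> y \<in> F i \<longrightarrow> x = y) \<longleftrightarrow>
             (\<forall>x\<in>X. \<forall>y\<in>X. \<forall>i\<in>I0. x \<in> G i \<and> y \<in> G i \<longrightarrow> x = y)"
      using H I by blast
    show ?thesis unfolding rainbow_def using 1 2 by blast
  qed
  have O: "(\<forall>a<n. \<forall>b<n. \<forall>i\<in>I'. \<forall>j\<in>I'. f a \<in> F i \<longrightarrow> f b \<in> F j \<longrightarrow> (a < b \<longleftrightarrow> i < j)) \<longleftrightarrow>
           (\<forall>a<n. \<forall>b<n. \<forall>i\<in>I0. \<forall>j\<in>I0. f a \<in> G i \<longrightarrow> f b \<in> G j \<longrightarrow> (a < b \<longleftrightarrow> i < j))"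
    if f: "bij_betw f {0..<n} X" for f
  proof -
    have fX: "\<And>a. a < n \<Longrightarrow> f a \<in> X" using f bij_betwE by fastforce
    show ?thesis
    proof
      assume L: "\<forall>a<n. \<forall>b<n. \<forall>i\<in>I'. \<forall>j\<in>I'. f a \<in> F i \<longrightarrow> f b \<in> F j \<longrightarrow> (a < b \<longleftrightarrow> i < j)"
      show "\<forall>a<n. \<forall>b<n. \<forall>i\<in>I0. \<forall>j\<in>I0. f a \<in> G i \<longrightarrow> f b \<in> G j \<longrightarrow> (a < b \<longleftrightarrow> i < j)"
      proof (intro allI impI ballI)
        fix a b i j assume "a < n" "b < n" "i \<in> I0" "j \<in> I0" "f a \<in> G i" "f b \<in> G j"
        then show "a < b \<longleftrightarrow> i < j" using H[OF fX[of a]] H[OF fX[of b]] L by blast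
      qed
    next
      assume L: "\<forall>a<n. \<forall>b<n. \<forall>i\<in>I0. \<forall>j\<in>I0. f a \<in> G i \<longrightarrow> f b \<in> G j \<longrightarrow> (a < b \<longleftrightarrow> i < j)"
      show "\<forall>a<n. \<forall>b<n. \<forall>i\<in>I'. \<forall>j\<in>I'. f a \<in> F i \<longrightarrow> f b \<in> F j \<longrightarrow> (a < b \<longleftrightarrow> i < j)"
      proof (intro allI impI ballI)
        fix a b i j assume "a < n" "b < n" "i \<in> I'" "j \<in> I'" "f a \<in> F i" "f b \<in> F j"
        then show "a < b \<longleftrightarrow> i < j" using H[OF fX[of a]] H[OF fX[of b]] L I by blast
      qed
    qed
  qed
  show "rainbow_copy E I' F X n J \<longleftrightarrow> rainbow_copy E I0 G X n J"
  proof
    assume "rainbow_copy E I' F X n J"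
    then obtain f where f: "rainbow I' F X" "bij_betw f {0..<n} X"
      "\<forall>a<n. \<forall>b<n. \<forall>i\<in>I'. \<forall>j\<in>I'. f a \<in> F i \<longrightarrow> f b \<in> F j \<longrightarrow> (a < b \<longleftrightarrow> i < j)"
      "\<forall>a<n. \<forall>b<n. a \<noteq> b \<longrightarrow> (E (f a) (f b) \<longleftrightarrow> J a b)"
      unfolding rainbow_copy_def by blast
    have "rainbow I0 G X" using f(1) R by blast
    moreover have "\<forall>a<n. \<forall>b<n. \<forall>i\<in>I0. \<forall>j\<in>I0. f a \<in> G i \<longrightarrow> f b \<in> G j \<longrightarrow> (a < b \<longleftrightarrow> i < j)"
      using O[OF f(2)] f(3) by blast
    ultimately show "rainbow_copy E I0 G X n J" unfolding rainbow_copy_def using f(2,4) by blast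
  next
    assume "rainbow_copy E I0 G X n J"
    then obtain f where f: "rainbow I0 G X" "bij_betw f {0..<n} X"
      "\<forall>a<n. \<forall>b<n. \<forall>i\<in>I0. \<forall>j\<in>I0. f a \<in> G i \<longrightarrow> f b \<in> G j \<longrightarrow> (a < b \<longleftrightarrow> i < j)"
      "\<forall>a<n. \<forall>b<n. a \<noteq> b \<longrightarrow> (E (f a) (f b) \<longleftrightarrow> J a b)"
      unfolding rainbow_copy_def by blast
    have "rainbow I' F X" using f(1) R by blast
    moreover have "\<forall>a<n. \<forall>b<n. \<forall>i\<in>I'. \<forall>j\<in>I'. f a \<in> F i \<longrightarrow> f b \<in> F j \<longrightarrow> (a < b \<longleftrightarrow> i < j)"
      using O[OF f(2)] f(3) by blast
    ultimately show "rainbow_copy E I' F X n J" unfolding rainbow_copy_def using f(2,4) by blast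
  qed
  have S: "(i \<in> I' \<and> X \<inter> F i \<noteq> {}) \<longleftrightarrow> (i \<in> I0 \<and> X \<inter> G i \<noteq> {})" for i
  proof
    assume a: "i \<in> I' \<and> X \<inter> F i \<noteq> {}"
    then obtain x where "x \<in> X" "x \<in> F i" by blast
    then show "i \<in> I0 \<and> X \<inter> G i \<noteq> {}" using H[of x i] a I by blast
  next
    assume a: "i \<in> I0 \<and> X \<inter> G i \<noteq> {}"
    then obtain x where "x \<in> X" "x \<in> G i" by blast
    then show "i \<in> I' \<and> X \<inter> F i \<noteq> {}" using H[of x i] a by blast
  qed
  show "support I' F X = support I0 G X"
    unfolding support_def using S by blast
qed

lemma trace_mono:
  assumes dD: "disj I D" and C: "contraction I D C"
  shows "trace E I C n J \<subseteq> trace E I D n J"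
proof
  fix S assume "S \<in> trace E I C n J"
  then obtain X where X: "S = support I C X" "rainbow_copy E I C X n J" unfolding trace_def by blast
  have XU: "X \<subseteq> (\<Union>i\<in>I. C i)" using X(2) unfolding rainbow_copy_def rainbow_def by blast
  have CD: "\<forall>i\<in>I. C i \<subseteq> D i" using C unfolding contraction_def by blast
  from key[OF order_refl dD CD XU] X show "S \<in> trace E I D n J" unfolding trace_def by auto
qed

lemma trace_restrict:
  assumes I: "I' \<subseteq> I0" and dG: "disj I0 G" and FG: "\<forall>i\<in>I'. F i = G i"
  shows "trace E I' F n J = {S \<in> trace E I0 G n J. S \<subseteq> I'}"
proof
  have FG': "\<forall>i\<in>I'. F i \<subseteq> G i" using FG by blast
  show "trace E I' F n J \<subseteq> {S \<in> trace E I0 G n J. S \<subseteq> I'}"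
  proof
    fix S assume "S \<in> trace E I' F n J"
    then obtain X where X: "S = support I' F X" "rainbow_copy E I' F X n J" unfolding trace_def by blast
    have XU: "X \<subseteq> (\<Union>i\<in>I'. F i)" using X(2) unfolding rainbow_copy_def rainbow_def by blast
    from key[OF I dG FG' XU] X show "S \<in> {S \<in> trace E I0 G n J. S \<subseteq> I'}"
      unfolding trace_def support_def by auto
  qed
  show "{S \<in> trace E I0 G n J. S \<subseteq> I'} \<subseteq> trace E I' F n J"
  proof
    fix S assume "S \<in> {S \<in> trace E I0 G n J. S \<subseteq> I'}"
    then obtain X where X: "S = support I0 G X" "rainbow_copy E I0 G X n J" "S \<subseteq> I'"
      unfolding trace_def by blast
    have XU: "X \<subseteq> (\<Union>i\<in>I'. F i)"
    proof
      fix x assume x: "x \<in> X"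
      then obtain i where i: "i \<in> I0" "x \<in> G i" using X(2) unfolding rainbow_copy_def rainbow_def by blast
      then have "i \<in> S" using X(1) x unfolding support_def by blast
      then show "x \<in> (\<Union>i\<in>I'. F i)" using X(3) FG i by blast
    qed
    from key[OF I dG FG' XU] X show "S \<in> trace E I' F n J"
      unfolding trace_def by auto
  qed
qed

lemma support_card:
  assumes dG: "disj I G" and X: "rainbow_copy E I G X n J"
  shows "card (support I G X) = n"
proof -
  obtain f where f: "bij_betw f {0..<n} X" using X unfolding rainbow_copy_def by blast
  have cX: "card X = n" using bij_betw_same_card[OF f] by simp
  have rb: "rainbow I G X" using X unfolding rainbow_copy_def by blast
  have u: "\<exists>!i. i \<in> I \<and> x \<in> G i" if "x \<in> X" for x
    using rb that dG unfolding rainbow_def disj_def by blast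
  define idx where "idx x = (THE i. i \<in> I \<and> x \<in> G i)" for x
  have idx: "idx x \<in> I \<and> x \<in> G (idx x)" if "x \<in> X" for x
    unfolding idx_def using theI'[OF u[OF that]] .
  have "bij_betw idx X (support I G X)"
  proof (rule bij_betw_imageI)
    show "inj_on idx X"
    proof
      fix x y assume "x \<in> X" "y \<in> X" "idx x = idx y"
      then show "x = y" using idx[of x] idx[of y] rb unfolding rainbow_def by metis
    qed
    show "idx ` X = support I G X"
    proof
      show "idx ` X \<subseteq> support I G X" using idx unfolding support_def by blast
      show "support I G X \<subseteq> idx ` X"
      proof
        fix i assume "i \<in> support I G X"
        then obtain x where x: "x \<in> X" "x \<in> G i" "i \<in> I" unfolding support_def by blast
        then have "idx x = i" using idx[OF x(1)] u[OF x(1)] by blast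
        then show "i \<in> idx ` X" using x by blast
      qed
    qed
  qed
  then show ?thesis using bij_betw_same_card cX by metis
qed

definition Tr :: "nat \<Rightarrow> (nat \<times> (nat \<Rightarrow> nat \<Rightarrow> bool)) set" where
  "Tr \<tau> = {(n, J). ordered_tree n J \<and> n \<le> \<tau>}"

lemma finite_Tr: "finite (Tr \<tau>)"
proof -
  have "Tr \<tau> \<subseteq> (\<lambda>(n, R). (n, \<lambda>a b. (a, b) \<in> R)) ` ({..\<tau>} \<times> Pow ({..<\<tau>} \<times> {..<\<tau>}))"
  proof
    fix t assume "t \<in> Tr \<tau>"
    then obtain n J where t: "t = (n, J)" "ordered_tree n J" "n \<le> \<tau>" unfolding Tr_def by blast
    have "{(a, b). J a b} \<subseteq> {..<\<tau>} \<times> {..<\<tau>}" using t(2,3) unfolding ordered_tree_def by force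
    moreover have "J = (\<lambda>a b. (a, b) \<in> {(a, b). J a b})" by simp
    ultimately show "t \<in> (\<lambda>(n, R). (n, \<lambda>a b. (a, b) \<in> R)) ` ({..\<tau>} \<times> Pow ({..<\<tau>} \<times> {..<\<tau>}))"
      using t by (intro image_eqI[of _ _ "(n, {(a, b). J a b})"]) auto
  qed
  then show ?thesis by (rule finite_subset) auto
qed

definition Pot where
  "Pot E I D \<tau> = {(t, S). t \<in> Tr \<tau> \<and> S \<in> trace E I D (fst t) (snd t)}"

lemma Pot_sub: "disj I D \<Longrightarrow> contraction I D C \<Longrightarrow> Pot E I C \<tau> \<subseteq> Pot E I D \<tau>"
  unfolding Pot_def using trace_mono by blast

lemma Pot_bound: "disj I D \<Longrightarrow> Pot E I D \<tau> \<subseteq> Tr \<tau> \<times> {S. S \<subseteq> I \<and> card S \<le> \<tau>}"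
proof
  fix p assume d: "disj I D" and "p \<in> Pot E I D \<tau>"
  then obtain n J S where p: "p = ((n, J), S)" "(n, J) \<in> Tr \<tau>" "S \<in> trace E I D n J"
    unfolding Pot_def by auto
  then obtain X where X: "S = support I D X" "rainbow_copy E I D X n J" unfolding trace_def by blast
  have "card S = n" using support_card[OF d X(2)] X(1) by simp
  moreover have "S \<subseteq> I" using X(1) unfolding support_def by blast
  ultimately show "p \<in> Tr \<tau> \<times> {S. S \<subseteq> I \<and> card S \<le> \<tau>}" using p unfolding Tr_def by auto
qed

lemma small_subsets:
  assumes "finite I" "card I \<ge> 1"
  shows "card {S. S \<subseteq> I \<and> card S \<le> \<tau>} \<le> (\<tau> + 1) * card I ^ \<tau>"
proof -
  have eq: "{S. S \<subseteq> I \<and> card S \<le> \<tau>} = (\<Union>n\<in>{..\<tau>}. nsets I n)"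
    using assms(1) by (auto simp: nsets_def intro: finite_subset)
  have "card (\<Union>n\<in>{..\<tau>}. nsets I n) \<le> (\<Sum>n\<in>{..\<tau>}. card (nsets I n))"
    by (rule card_UN_le) simp
  also have "\<dots> = (\<Sum>n\<in>{..\<tau>}. card I choose n)" by simp
  also have "\<dots> \<le> (\<Sum>n\<in>{..\<tau>}. card I ^ \<tau>)"
  proof (rule sum_mono)
    fix n assume "n \<in> {..\<tau>}"
    have f1: "(1::nat) \<le> fact n" by (simp add: Suc_leI fact_gt_zero)
    have "card I choose n = (card I choose n) * 1" by simp
    also have "\<dots> \<le> (card I choose n) * fact n" using f1 by (rule mult_le_mono2)
    also have "\<dots> \<le> card I ^ n" by (rule binomial_fact_pow)
    finally have "card I choose n \<le> card I ^ n" .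
    moreover have "card I ^ n \<le> card I ^ \<tau>" using assms(2) \<open>n \<in> {..\<tau>}\<close> by (auto intro: power_increasing)
    ultimately show "card I choose n \<le> card I ^ \<tau>" by linarith
  qed
  also have "\<dots> = (\<tau> + 1) * card I ^ \<tau>" by simp
  finally show ?thesis using eq by simp
qed

lemma width_ge:
  assumes "finite I" "I \<noteq> {}" "width_at_least I C x"
  shows "x \<le> real (width I C)"
proof -
  have "width I C \<in> (\<lambda>i. card (C i)) ` I" unfolding width_def using assms by (intro Min_in) auto
  then obtain i where "i \<in> I" "width I C = card (C i)" by blast
  then show ?thesis using assms(3) unfolding width_at_least_def by simp
qed

lemma width_le: "finite I \<Longrightarrow> i \<in> I \<Longrightarrow> width I C \<le> card (C i)"
  unfolding width_def by (rule Min_le) auto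

lemma contraction_trans: "contraction I D C \<Longrightarrow> contraction I C C' \<Longrightarrow> contraction I D C'"
  unfolding contraction_def by blast

lemma disj_contraction: "disj I D \<Longrightarrow> contraction I D C \<Longrightarrow> disj I C"
  unfolding contraction_def disj_def by blast

lemma finite_Pot: "finite I \<Longrightarrow> disj I D \<Longrightarrow> finite (Pot E I D \<tau>)"
  by (rule finite_subset[OF Pot_bound]) (auto intro: finite_Tr)

lemma iterate:
  assumes I: "finite I" "I \<noteq> {}" and k: "0 < \<kappa>" "\<kappa> \<le> 1"
  shows "disj I D \<Longrightarrow> contraction I D D \<Longrightarrow> card (Pot E I D \<tau>) \<le> m \<Longrightarrow>
    \<exists>D'. contraction I D D' \<and> support_invariant E I D' \<kappa> \<tau> \<and> \<kappa> ^ m * real (width I D) \<le> real (width I D')"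
proof (induction m arbitrary: D rule: less_induct)
  case (less m D)
  show ?case
  proof (cases "support_invariant E I D \<kappa> \<tau>")
    case True
    have "\<kappa> ^ m \<le> 1" using k by (simp add: power_le_one)
    then have "\<kappa> ^ m * real (width I D) \<le> real (width I D)"
      using mult_left_le_one_le[of "real (width I D)" "\<kappa> ^ m"] k by simp
    then show ?thesis using True less.prems by blast
  next
    case False
    then obtain C n J where C: "contraction I D C" "width_at_least I C (\<kappa> * real (width I D))"
      "ordered_tree n J" "n \<le> \<tau>" "trace E I D n J \<noteq> trace E I C n J"
      unfolding support_invariant_def by blast
    have sub: "trace E I C n J \<subseteq> trace E I D n J" using trace_mono[OF less.prems(1) C(1)] .
    then obtain S where S: "S \<in> trace E I D n J" "S \<notin> trace E I C n J" using C(5) by blast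
    have PS: "Pot E I C \<tau> \<subseteq> Pot E I D \<tau>" using Pot_sub[OF less.prems(1) C(1)] .
    have "((n, J), S) \<in> Pot E I D \<tau>" "((n, J), S) \<notin> Pot E I C \<tau>"
      using S C(3,4) unfolding Pot_def Tr_def by auto
    then have "Pot E I C \<tau> \<subset> Pot E I D \<tau>" using PS by blast
    then have lt: "card (Pot E I C \<tau>) < card (Pot E I D \<tau>)"
      using finite_Pot[OF I(1) less.prems(1)] by (rule psubset_card_mono[rotated])
    define p where "p = card (Pot E I C \<tau>)"
    have pm: "p < m" using lt less.prems(3) p_def by linarith
    have dC: "disj I C" using disj_contraction[OF less.prems(1) C(1)] .
    have cC: "contraction I C C" using C(1) unfolding contraction_def by blast
    obtain D' where D': "contraction I C D'" "support_invariant E I D' \<kappa> \<tau>"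
      "\<kappa> ^ p * real (width I C) \<le> real (width I D')"
      using less.IH[OF pm dC cC] p_def by auto
    have wC: "\<kappa> * real (width I D) \<le> real (width I C)" using width_ge[OF I C(2)] .
    have "\<kappa> ^ m \<le> \<kappa> ^ Suc p" using k pm by (intro power_decreasing) auto
    then have "\<kappa> ^ m * real (width I D) \<le> \<kappa> ^ Suc p * real (width I D)"
      by (rule mult_right_mono) simp
    also have "\<dots> = \<kappa> ^ p * (\<kappa> * real (width I D))" by simp
    also have "\<dots> \<le> \<kappa> ^ p * real (width I C)" using wC k by (simp add: mult_left_mono)
    also have "\<dots> \<le> real (width I D')" by fact
    finally show ?thesis using contraction_trans[OF C(1) D'(1)] D'(2) by blast
  qed
qed

lemma growth:
  fixes c t K :: nat
  assumes K1: "c * (t + 1) ^ (t + 1) \<le> K" and K2: "t + 1 \<le> K"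
  shows "c * K ^ t \<le> 2 ^ K"
proof -
  define s where "s = t + 1"
  have s0: "(0::real) < real s ^ s" using s_def by simp
  have "(real K / real s) ^ s \<le> real (K choose s)"
    using K2 s_def by (intro binomial_ge_n_over_k_pow_k) simp
  also have "\<dots> \<le> real (2 ^ K)" using binomial_le_pow2 by (metis of_nat_le_iff)
  finally have A: "(real K / real s) ^ s \<le> 2 ^ K" by simp
  have "(real K / real s) ^ s = real K ^ t * (real K / real s ^ s)"
    by (simp add: s_def power_divide)
  moreover have "real c \<le> real K / real s ^ s"
  proof -
    have "real c * real s ^ s \<le> real K" using K1 s_def by (metis of_nat_le_iff of_nat_mult of_nat_power)
    then show ?thesis using s0 by (simp add: field_simps)
  qed
  ultimately have "real c * real K ^ t \<le> (real K / real s) ^ s"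
    using mult_right_mono[of "real c" "real K / real s ^ s" "real K ^ t"] by (simp add: mult.commute)
  then have "real (c * K ^ t) \<le> real (2 ^ K)" using A by simp
  then show ?thesis by linarith
qed

theorem theorem4p3:
  fixes k \<tau> :: nat and \<kappa> :: real
  assumes "\<tau> \<ge> 1" and "0 < \<kappa>" and "\<kappa> \<le> 1"
  shows "\<exists>K::nat. \<forall>(V::nat set) E B. graph V E \<and> blockade V {1..int K} B \<longrightarrow>
           (\<exists>I' B'. minor {1..int K} B I' B' \<and> card I' = k \<and> equicardinal I' B'
              \<and> width_at_least I' B' (\<kappa> ^ (2 ^ K * \<tau> ^ \<tau>) * real (width {1..int K} B))
              \<and> support_uniform E I' B' \<tau> \<and> support_invariant E I' B' \<kappa> \<tau>)"
proof -
  note k = assms(2,3)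
  obtain ts where ts: "set ts = Tr \<tau>" using finite_list[OF finite_Tr] by blast
  define rs where "rs = map fst ts"
  obtain N where N: "\<And>(A::nat set) (c::nat \<Rightarrow> nat set \<Rightarrow> bool). finite A \<Longrightarrow> N \<le> card A \<Longrightarrow>
     (\<exists>H\<subseteq>A. card H = k \<and> (\<forall>j<length rs. \<forall>X\<in>nsets H (rs!j). \<forall>Y\<in>nsets H (rs!j). c j X = c j Y))"
    using multi_ramsey[of k rs] by blast
  define c where "c = card (Tr \<tau>) * (\<tau> + 1)"
  define K where "K = max (max N 1) (max (c * (\<tau> + 1) ^ (\<tau> + 1)) (\<tau> + 1))"
  have K: "N \<le> K" "1 \<le> K" "c * (\<tau> + 1) ^ (\<tau> + 1) \<le> K" "\<tau> + 1 \<le> K" unfolding K_def by auto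
  define I0 where "I0 = {1..int K}"
  have I0: "finite I0" "I0 \<noteq> {}" "card I0 = K" using K(2) unfolding I0_def by auto
  show ?thesis
  proof (rule exI[of _ K], intro allI impI, elim conjE)
    fix V :: "nat set" and E B
    assume G: "graph V E" and Bl: "blockade V {1..int K} B"
    have finV: "finite V" using G unfolding graph_def by blast
    have dB: "disj I0 B" using Bl unfolding blockade_def disj_def I0_def by blast
    have cB: "contraction I0 B B" using Bl unfolding blockade_def contraction_def I0_def by blast
    define m where "m = card (Pot E I0 B \<tau>)"
    have "m \<le> card (Tr \<tau> \<times> {S. S \<subseteq> I0 \<and> card S \<le> \<tau>})"
      unfolding m_def using Pot_bound[OF dB] finite_Tr I0(1)
      by (intro card_mono) auto
    also have "\<dots> = card (Tr \<tau>) * card {S. S \<subseteq> I0 \<and> card S \<le> \<tau>}" by (rule card_cartesian_product)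
    also have "\<dots> \<le> card (Tr \<tau>) * ((\<tau> + 1) * K ^ \<tau>)"
      using small_subsets[OF I0(1), of \<tau>] I0(3) K(2) by simp
    also have "\<dots> = c * K ^ \<tau>" unfolding c_def by (simp only: mult.assoc)
    also have "\<dots> \<le> 2 ^ K" using growth[OF K(3) K(4)] .
    also have "\<dots> \<le> 2 ^ K * \<tau> ^ \<tau>" using assms(1) by simp
    finally have mle: "m \<le> 2 ^ K * \<tau> ^ \<tau>" .
    obtain D where D: "contraction I0 B D" "support_invariant E I0 D \<kappa> \<tau>"
      "\<kappa> ^ m * real (width I0 B) \<le> real (width I0 D)"
      using iterate[OF I0(1,2) k dB cB order_refl] m_def by blast
    define w where "w = width I0 D"
    have "\<kappa> ^ (2 ^ K * \<tau> ^ \<tau>) \<le> \<kappa> ^ m" using k mle by (intro power_decreasing) auto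
    then have wbig: "\<kappa> ^ (2 ^ K * \<tau> ^ \<tau>) * real (width I0 B) \<le> real w"
      using D(3) unfolding w_def by (meson mult_right_mono of_nat_0_le_iff order_trans)
    have dD: "disj I0 D" using disj_contraction[OF dB D(1)] .
    have finD: "finite (D i)" "D i \<noteq> {}" if "i \<in> I0" for i
    proof -
      have "D i \<subseteq> B i" "B i \<subseteq> V" "D i \<noteq> {}"
        using D(1) Bl that unfolding contraction_def blockade_def I0_def by auto
      then have "D i \<subseteq> V" by blast
      then show "finite (D i)" using finV by (rule finite_subset)
      show "D i \<noteq> {}" by fact
    qed
    have w1: "1 \<le> w"
    proof -
      have "w \<in> (\<lambda>i. card (D i)) ` I0" unfolding w_def width_def using I0 by (intro Min_in) auto
      then obtain i where "i \<in> I0" "w = card (D i)" by blast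
      then show ?thesis using finD[of i] by (simp add: Suc_leI card_gt_0_iff)
    qed
    have "\<forall>i\<in>I0. \<exists>T. T \<subseteq> D i \<and> card T = w"
    proof
      fix i assume i: "i \<in> I0"
      have "w \<le> card (D i)" unfolding w_def using width_le[OF I0(1) i] .
      then show "\<exists>T. T \<subseteq> D i \<and> card T = w" by (meson obtain_subset_with_card_n)
    qed
    then obtain B' where B': "\<And>i. i \<in> I0 \<Longrightarrow> B' i \<subseteq> D i \<and> card (B' i) = w" by metis
    have B'ne: "B' i \<noteq> {}" if "i \<in> I0" for i using B'[OF that] w1 by auto
    have cB': "contraction I0 D B'" using B' B'ne unfolding contraction_def by blast
    have dB': "disj I0 B'" using disj_contraction[OF dD cB'] .
    have "width_at_least I0 B' (\<kappa> * real (width I0 D))"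
      unfolding width_at_least_def w_def[symmetric] using B' k
      by (simp add: mult_left_le_one_le)
    then have trB': "trace E I0 D n J = trace E I0 B' n J" if "ordered_tree n J" "n \<le> \<tau>" for n J
      using D(2) cB' that unfolding support_invariant_def by blast
    define g :: "nat \<Rightarrow> int" where "g x = int x + 1" for x
    have ginj: "inj g" unfolding g_def inj_def by simp
    have gimg: "g ` {..<K} = I0"
    proof
      show "g ` {..<K} \<subseteq> I0" unfolding g_def I0_def by auto
      show "I0 \<subseteq> g ` {..<K}"
      proof
        fix i assume "i \<in> I0"
        then have "i = g (nat (i - 1))" "nat (i - 1) < K" unfolding g_def I0_def by auto
        then show "i \<in> g ` {..<K}" by blast
      qed
    qed
    define cc where "cc j X = (g ` X \<in> trace E I0 D (fst (ts ! j)) (snd (ts ! j)))" for j X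
    obtain H where H: "H \<subseteq> {..<K}" "card H = k"
      and hom: "\<forall>j<length rs. \<forall>X\<in>nsets H (rs!j). \<forall>Y\<in>nsets H (rs!j). cc j X = cc j Y"
      using N[of "{..<K}" cc] K(1) by auto
    define I' where "I' = g ` H"
    have I'0: "I' \<subseteq> I0" using H gimg unfolding I'_def by blast
    have cI': "card I' = k" unfolding I'_def using H ginj by (simp add: card_image inj_on_subset)
    have finI': "finite I'" using I'0 I0(1) finite_subset by blast
    have homI: "S \<in> trace E I0 D n J \<longleftrightarrow> S' \<in> trace E I0 D n J"
      if nJ: "(n, J) \<in> Tr \<tau>" and S: "S \<subseteq> I'" "card S = n" and S': "S' \<subseteq> I'" "card S' = n" for n J S S'
    proof -
      obtain j where j: "j < length ts" "ts ! j = (n, J)" using nJ ts by (metis in_set_conv_nth)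
      have rj: "j < length rs" "rs ! j = n" using j unfolding rs_def by auto
      have pre: "\<exists>X. X \<in> nsets H n \<and> g ` X = T" if "T \<subseteq> I'" "card T = n" for T
      proof -
        define X0 where "X0 = H \<inter> g -` T"
        have "g ` X0 = T" using that(1) unfolding X0_def I'_def by blast
        moreover have "finite X0" using H unfolding X0_def by (meson finite_lessThan finite_subset inf_le1)
        moreover have "card X0 = n" using \<open>g ` X0 = T\<close> that(2) ginj by (metis card_image inj_on_subset subset_UNIV)
        moreover have "X0 \<subseteq> H" unfolding X0_def by blast
        ultimately show ?thesis unfolding nsets_def by blast
      qed
      obtain X where X: "X \<in> nsets H n" "g ` X = S" using pre[OF S] by blast
      obtain Y where Y: "Y \<in> nsets H n" "g ` Y = S'" using pre[OF S'] by blast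
      have "X \<in> nsets H (rs ! j)" "Y \<in> nsets H (rs ! j)" using X(1) Y(1) rj(2) by simp_all
      then have "cc j X = cc j Y" by (rule hom[rule_format, OF rj(1)])
      then show ?thesis unfolding cc_def using X(2) Y(2) j(2) by simp
    qed
    have cardT: "card S = n" if "S \<in> trace E I0 D n J" for S n J
      using that support_card[OF dD] unfolding trace_def by blast
    have restrB': "trace E I' B' n J = {S \<in> trace E I0 B' n J. S \<subseteq> I'}" for n J
      using trace_restrict[OF I'0 dB'] by blast
    show "\<exists>I' B'. minor {1..int K} B I' B' \<and> card I' = k \<and> equicardinal I' B'
              \<and> width_at_least I' B' (\<kappa> ^ (2 ^ K * \<tau> ^ \<tau>) * real (width {1..int K} B))
              \<and> support_uniform E I' B' \<tau> \<and> support_invariant E I' B' \<kappa> \<tau>"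
    proof (intro exI conjI)
      have "\<forall>i\<in>I'. B' i \<noteq> {} \<and> B' i \<subseteq> B i"
      proof
        fix i assume "i \<in> I'"
        then have i: "i \<in> I0" using I'0 by blast
        have "D i \<subseteq> B i" using D(1) i unfolding contraction_def by blast
        then show "B' i \<noteq> {} \<and> B' i \<subseteq> B i" using B'[OF i] B'ne[OF i] by blast
      qed
      then show "minor {1..int K} B I' B'"
        unfolding minor_def contraction_def using I'0 unfolding I0_def by blast
      show "card I' = k" by fact
      show "equicardinal I' B'" unfolding equicardinal_def using B' I'0 by auto
      show "width_at_least I' B' (\<kappa> ^ (2 ^ K * \<tau> ^ \<tau>) * real (width {1..int K} B))"
        unfolding width_at_least_def using B' I'0 wbig unfolding I0_def by auto
      show "support_uniform E I' B' \<tau>"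
        unfolding support_uniform_def
      proof (intro allI impI)
        fix n J assume nJ: "ordered_tree n J \<and> n \<le> \<tau>"
        have Tr: "(n, J) \<in> Tr \<tau>" using nJ unfolding Tr_def by simp
        have eq: "trace E I' B' n J = {S \<in> trace E I0 D n J. S \<subseteq> I'}"
          using restrB' trB' nJ by simp
        show "trace E I' B' n J = {} \<or> trace E I' B' n J = {S. S \<subseteq> I' \<and> card S = n}"
        proof (cases "trace E I' B' n J = {}")
          case False
          then obtain S0 where S0: "S0 \<in> trace E I0 D n J" "S0 \<subseteq> I'" using eq by blast
          have "trace E I' B' n J = {S. S \<subseteq> I' \<and> card S = n}"
          proof
            show "trace E I' B' n J \<subseteq> {S. S \<subseteq> I' \<and> card S = n}" using eq cardT by blast
            show "{S. S \<subseteq> I' \<and> card S = n} \<subseteq> trace E I' B' n J"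
            proof
              fix S assume "S \<in> {S. S \<subseteq> I' \<and> card S = n}"
              then have S: "S \<subseteq> I'" "card S = n" by auto
              have "S \<in> trace E I0 D n J" using homI[OF Tr S S0(2) cardT[OF S0(1)]] S0(1) by blast
              then show "S \<in> trace E I' B' n J" using eq S by blast
            qed
          qed
          then show ?thesis by blast
        qed blast
      qed
      show "support_invariant E I' B' \<kappa> \<tau>"
        unfolding support_invariant_def
      proof (intro allI impI)
        fix C n J
        assume C: "contraction I' B' C \<and> width_at_least I' C (\<kappa> * real (width I' B'))"
          and nJ: "ordered_tree n J \<and> n \<le> \<tau>"
        define C' where "C' i = (if i \<in> I' then C i else B' i)" for i
        have cC': "contraction I0 D C'"
          unfolding contraction_def
        proof
          fix i assume i: "i \<in> I0"
          show "C' i \<noteq> {} \<and> C' i \<subseteq> D i"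
          proof (cases "i \<in> I'")
            case True
            have "C i \<noteq> {}" "C i \<subseteq> B' i" using C True unfolding contraction_def by auto
            then show ?thesis using B'[OF i] True unfolding C'_def by auto
          next
            case False
            then show ?thesis using B'[OF i] B'ne[OF i] unfolding C'_def by auto
          qed
        qed
        have wI': "width I' B' = w" if "I' \<noteq> {}"
        proof -
          have "(\<lambda>i. card (B' i)) ` I' = {w}" using that B' I'0 by auto
          then show ?thesis unfolding width_def by simp
        qed
        have "width_at_least I0 C' (\<kappa> * real (width I0 D))"
          unfolding width_at_least_def w_def[symmetric]
        proof
          fix i assume i: "i \<in> I0"
          show "\<kappa> * real w \<le> real (card (C' i))"
          proof (cases "i \<in> I'")
            case True
            then have "width I' B' = w" using wI' by blast
            then show ?thesis using C True unfolding width_at_least_def C'_def by auto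
          next
            case False
            then show ?thesis using B'[OF i] k unfolding C'_def by (simp add: mult_left_le_one_le)
          qed
        qed
        then have t1: "trace E I0 D n J = trace E I0 C' n J"
          using D(2) cC' nJ unfolding support_invariant_def by blast
        have dC': "disj I0 C'" using disj_contraction[OF dD cC'] .
        have "trace E I' C n J = {S \<in> trace E I0 C' n J. S \<subseteq> I'}"
          using trace_restrict[OF I'0 dC', of C] unfolding C'_def by simp
        moreover have "trace E I' B' n J = {S \<in> trace E I0 D n J. S \<subseteq> I'}"
          using restrB' trB' nJ by simp
        ultimately show "trace E I' B' n J = trace E I' C n J" using t1 by simp
      qed
    qed
  qed
qed

end
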